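(* Let $\tilde S\subseteq\mathfrak P$. Suppose $\tilde O\subseteq\mathcal C_{\mathfrak P}(\tilde S)$ is an unimprovable set with respect to $\tilde S$ that extends to $\tilde X:=\{o\}\cup\tilde X'\subseteq\mathcal C_{\mathfrak P}(\tilde S)$, and suppose there exists $h\in\mathcal C_{\mathfrak P}(\tilde S)$ of weight $\omega_{\tilde S}(o)$ that anticommutes with $o$ but commutes with every operator in $\tilde X'$. Then $\tilde O\cup\{o\}$ is an unimprovable set with respect to $\tilde S$ that extends to $\tilde X'$.
   Context: $\mathfrak P$ is the group of $N$-qubit Pauli operators modulo phases; $\mathcal C_{\mathfrak P}(\tilde S)$ is the centralizer of $\tilde S$; $\Pi(T)$ is the product of the elements of a finite set $T$. The weight of a Pauli operator is its number of non-identity tensor factors. For $l\in\mathcal C_{\mathfrak P}(\tilde S)$, $\omega_{\tilde S}(l)$ is the minimum weight of an $e\in\mathcal C_{\mathfrak P}(\tilde S)$ anticommuting with $l$ ($+\infty$ if none). A set $\tilde O\subseteq\mathcal C_{\mathfrak P}(\tilde S)$ is unimprovable with respect to $\tilde S$ if $\omega_{\tilde S}(\Pi(\tilde Y))=\min_{y\in\tilde Y}\omega_{\tilde S}(y)$ for every $\tilde Y\subseteq\tilde O$; it extends to a set $\tilde Q$ if for every $\tilde Y\subseteq\tilde O\cup\tilde Q$ with $\tilde Y\cap\tilde O\neq\emptyset$, $\omega_{\tilde S}(\Pi(\tilde Y))\le\min_{y\in\tilde Y\cap\tilde O}\omega_{\tilde S}(y)$. *)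

theory Defs
  imports Main "HOL-Library.Extended_Nat"
begin

text \<open>N-qubit Pauli operators modulo phases, in the binary symplectic representation:
  a Pauli operator is a pair (x, z) of bit vectors indexed by qubits; qubit i carries
  I, X, Z, Y according to (x i, z i) = (F,F), (T,F), (F,T), (T,T).\<close>

type_synonym pauli = "(nat \<Rightarrow> bool) \<times> (nat \<Rightarrow> bool)"

definition paulis :: "nat \<Rightarrow> pauli set" where
  "paulis N = {p. \<forall>i\<ge>N. \<not> fst p i \<and> \<not> snd p i}"

definition pmult :: "pauli \<Rightarrow> pauli \<Rightarrow> pauli" where
  "pmult p q = ((\<lambda>i. fst p i \<noteq> fst q i), (\<lambda>i. snd p i \<noteq> snd q i))"

definition pid :: pauli where
  "pid = ((\<lambda>_. False), (\<lambda>_. False))"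

text \<open>Product of the elements of a finite set (the group mod phases is abelian).\<close>
definition prodP :: "pauli set \<Rightarrow> pauli" where
  "prodP T = Finite_Set.fold pmult pid T"

text \<open>Two Paulis anticommute iff they differ non-trivially on an odd number of qubits
  (odd symplectic product).\<close>
definition anticommutes :: "nat \<Rightarrow> pauli \<Rightarrow> pauli \<Rightarrow> bool" where
  "anticommutes N p q \<longleftrightarrow>
     odd (card {i. i < N \<and> ((fst p i \<and> snd q i) \<noteq> (snd p i \<and> fst q i))})"

definition weight :: "nat \<Rightarrow> pauli \<Rightarrow> nat" where
  "weight N p = card {i. i < N \<and> (fst p i \<or> snd p i)}"

definition centralizer :: "nat \<Rightarrow> pauli set \<Rightarrow> pauli set" where
  "centralizer N S = {p \<in> paulis N. \<forall>s\<in>S. \<not> anticommutes N p s}"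

text \<open>\<omega>_S(l): minimum weight of an element of the centralizer anticommuting with l;
  infinity if there is none (Inf of the empty set of enat is \<infinity>).\<close>
definition omega :: "nat \<Rightarrow> pauli set \<Rightarrow> pauli \<Rightarrow> enat" where
  "omega N S l = (INF e \<in> {e \<in> centralizer N S. anticommutes N e l}. enat (weight N e))"

definition unimprovable :: "nat \<Rightarrow> pauli set \<Rightarrow> pauli set \<Rightarrow> bool" where
  "unimprovable N S Ob \<longleftrightarrow> Ob \<subseteq> centralizer N S \<and>
     (\<forall>Y. Y \<subseteq> Ob \<longrightarrow> omega N S (prodP Y) = (INF y \<in> Y. omega N S y))"

definition extends_to :: "nat \<Rightarrow> pauli set \<Rightarrow> pauli set \<Rightarrow> pauli set \<Rightarrow> bool" where
  "extends_to N S Ob Q \<longleftrightarrow>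
     (\<forall>Y. Y \<subseteq> Ob \<union> Q \<longrightarrow> Y \<inter> Ob \<noteq> {} \<longrightarrow> omega N S (prodP Y) \<le> (INF y \<in> Y \<inter> Ob. omega N S y))"

end

theory Submission
  imports Defs
begin

lemma pmult_comm: "pmult a b = pmult b a"
  unfolding pmult_def by auto

lemma pmult_cancel: "pmult (pmult a b) b = a"
  unfolding pmult_def by (cases a) auto

lemma pmult_pid: "pmult p pid = p"
  unfolding pmult_def pid_def by (cases p) auto

interpretation pm: comp_fun_commute pmult
  by unfold_locales (auto simp: pmult_def fun_eq_iff)

lemma prodP_empty[simp]: "prodP {} = pid"
  unfolding prodP_def by simp

lemma prodP_insert: "finite A \<Longrightarrow> x \<notin> A \<Longrightarrow> prodP (insert x A) = pmult x (prodP A)"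
  unfolding prodP_def by (simp add: pm.fold_insert)

lemma prodP_union: "finite A \<Longrightarrow> finite B \<Longrightarrow> A \<inter> B = {} \<Longrightarrow>
   prodP (A \<union> B) = pmult (prodP A) (prodP B)"
proof (induction A rule: finite_induct)
  case empty
  then show ?case by (metis pmult_comm pmult_pid Un_empty_left prodP_empty)
next
  case (insert x F)
  then show ?case
    by (simp add: prodP_insert pmult_def fun_eq_iff) blast
qed

lemma card_xor:
  "odd (card {i. i < (N::nat) \<and> (P i \<noteq> Q i)}) = (odd (card {i. i < N \<and> P i}) \<noteq> odd (card {i. i < N \<and> Q i}))"
proof (induction N)
  case 0
  then show ?case by simp
next
  case (Suc N)
  have e: "\<And>R. {i. i < Suc N \<and> R i} = (if R N then insert N {i. i < N \<and> R i} else {i. i < N \<and> R i})"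
    using less_Suc_eq by auto
  show ?case using Suc by (simp add: e)
qed

lemma anti_mult: "anticommutes N e (pmult a b) = (anticommutes N e a \<noteq> anticommutes N e b)"
proof -
  have "{i. i < N \<and> ((fst e i \<and> snd (pmult a b) i) \<noteq> (snd e i \<and> fst (pmult a b) i))}
     = {i. i < N \<and> (((fst e i \<and> snd a i) \<noteq> (snd e i \<and> fst a i)) \<noteq> ((fst e i \<and> snd b i) \<noteq> (snd e i \<and> fst b i)))}"
    unfolding pmult_def by auto
  then show ?thesis unfolding anticommutes_def
    by (simp only:) (rule card_xor)
qed

lemma anti_pid: "\<not> anticommutes N e pid"
  unfolding anticommutes_def pid_def by simp

lemma anti_prodP: "finite B \<Longrightarrow> \<forall>x\<in>B. \<not> anticommutes N e x \<Longrightarrow> \<not> anticommutes N e (prodP B)"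
  by (induction B rule: finite_induct) (auto simp: prodP_insert anti_mult anti_pid)

lemma finite_paulis: "finite (paulis N)"
proof -
  let ?F = "(\<lambda>A i. i \<in> A) ` Pow {..<N}"
  have F: "{f::nat\<Rightarrow>bool. \<forall>i\<ge>N. \<not> f i} \<subseteq> ?F"
  proof
    fix f :: "nat \<Rightarrow> bool" assume "f \<in> {f. \<forall>i\<ge>N. \<not> f i}"
    then have "{i. f i} \<in> Pow {..<N}" "f = (\<lambda>i. i \<in> {i. f i})" using not_less by auto
    then show "f \<in> ?F" by blast
  qed
  have "paulis N \<subseteq> ?F \<times> ?F" unfolding paulis_def using F by auto
  then show ?thesis by (rule finite_subset) auto
qed

lemma omega_le: "e \<in> centralizer N S \<Longrightarrow> anticommutes N e l \<Longrightarrow> omega N S l \<le> enat (weight N e)"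
  unfolding omega_def by (rule INF_lower) auto

lemma omega_mult: "min (omega N S a) (omega N S b) \<le> omega N S (pmult a b)"
  unfolding omega_def
proof (rule INF_greatest)
  fix e assume "e \<in> {e \<in> centralizer N S. anticommutes N e (pmult a b)}"
  then have c: "e \<in> centralizer N S" and "anticommutes N e a \<or> anticommutes N e b"
    by (auto simp: anti_mult)
  then show "min (INF e\<in>{e \<in> centralizer N S. anticommutes N e a}. enat (weight N e))
          (INF e\<in>{e \<in> centralizer N S. anticommutes N e b}. enat (weight N e)) \<le> enat (weight N e)"
    by (metis (mono_tags, lifting) INF_lower mem_Collect_eq min.coboundedI1 min.coboundedI2)
qed

lemma omega_mult_eq: "omega N S a \<noteq> omega N S b \<Longrightarrow> omega N S (pmult a b) = min (omega N S a) (omega N S b)"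
proof -
  assume ne: "omega N S a \<noteq> omega N S b"
  have 1: "min (omega N S a) (omega N S b) \<le> omega N S (pmult a b)" by (rule omega_mult)
  have 2: "min (omega N S (pmult a b)) (omega N S b) \<le> omega N S a"
    using omega_mult[of N S "pmult a b" b] by (simp add: pmult_cancel)
  have 3: "min (omega N S (pmult a b)) (omega N S a) \<le> omega N S b"
    using omega_mult[of N S "pmult a b" a] by (simp add: pmult_cancel pmult_comm[of a b])
  show ?thesis using 1 2 3 ne by (auto simp: min_def split: if_splits)
qed


theorem lemma8:
  fixes N :: nat and S Ob X' :: "pauli set" and o1 h :: pauli
  assumes "S \<subseteq> paulis N"
    and "Ob \<subseteq> centralizer N S"
    and "unimprovable N S Ob"
    and "insert o1 X' \<subseteq> centralizer N S"
    and "extends_to N S Ob (insert o1 X')"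
    and "h \<in> centralizer N S"
    and "enat (weight N h) = omega N S o1"
    and "anticommutes N h o1"
    and "\<forall>x\<in>X'. \<not> anticommutes N h x"
  shows "unimprovable N S (Ob \<union> {o1}) \<and> extends_to N S (Ob \<union> {o1}) X'"
proof -
  let ?w = "omega N S"
  have cp: "centralizer N S \<subseteq> paulis N" unfolding centralizer_def by auto
  have finU: "finite (Ob \<union> insert o1 X')"
    using assms(2,4) cp finite_paulis by (meson Un_least finite_subset subset_trans)
  have unO: "\<And>Y. Y \<subseteq> Ob \<Longrightarrow> ?w (prodP Y) = (INF y\<in>Y. ?w y)"
    using assms(3) unfolding unimprovable_def by auto
  have extO: "\<And>Y. Y \<subseteq> Ob \<union> insert o1 X' \<Longrightarrow> Y \<inter> Ob \<noteq> {} \<Longrightarrow>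
      ?w (prodP Y) \<le> (INF y\<in>Y \<inter> Ob. ?w y)"
    using assms(5) unfolding extends_to_def by auto
  have o1X: "o1 \<notin> X'" using assms(8,9) by auto
  have P1: "unimprovable N S (Ob \<union> {o1})"
    unfolding unimprovable_def
  proof (intro conjI allI impI)
    show "Ob \<union> {o1} \<subseteq> centralizer N S" using assms(2,4) by auto
  next
    fix Y assume Y: "Y \<subseteq> Ob \<union> {o1}"
    show "?w (prodP Y) = (INF y\<in>Y. ?w y)"
    proof (cases "o1 \<in> Y \<and> o1 \<notin> Ob")
      case False
      then have "Y \<subseteq> Ob" using Y by auto
      then show ?thesis by (rule unO)
    next
      case True
      define Y0 where "Y0 = Y - {o1}"
      have Y0O: "Y0 \<subseteq> Ob" using Y unfolding Y0_def by auto
      have finY0: "finite Y0" using Y0O finU finite_subset by blast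
      have YY: "Y = insert o1 Y0" using True unfolding Y0_def by auto
      have pY: "prodP Y = pmult o1 (prodP Y0)" unfolding YY
        by (rule prodP_insert[OF finY0]) (simp add: Y0_def)
      have iY: "(INF y\<in>Y. ?w y) = min (?w o1) (INF y\<in>Y0. ?w y)" using YY by (simp add: inf_min)
      have u0: "?w (prodP Y0) = (INF y\<in>Y0. ?w y)" using unO Y0O by auto
      show ?thesis
      proof (cases "?w o1 = ?w (prodP Y0)")
        case False
        then show ?thesis using pY iY u0 omega_mult_eq by auto
      next
        case eq: True
        show ?thesis
        proof (cases "Y0 = {}")
          case True
          then show ?thesis using pY iY u0 by (simp add: pmult_pid)
        next
          case False
          have "Y \<inter> Ob = Y0" using True Y unfolding Y0_def by auto
          then have "?w (prodP Y) \<le> (INF y\<in>Y0. ?w y)"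
            using extO[of Y] Y False by auto
          moreover have "min (?w o1) (?w (prodP Y0)) \<le> ?w (prodP Y)"
            using pY omega_mult by auto
          ultimately show ?thesis using iY u0 eq by auto
        qed
      qed
    qed
  qed
  have P2: "extends_to N S (Ob \<union> {o1}) X'"
    unfolding extends_to_def
  proof (intro allI impI)
    fix Y assume Y: "Y \<subseteq> Ob \<union> {o1} \<union> X'" and ne: "Y \<inter> (Ob \<union> {o1}) \<noteq> {}"
    have YU: "Y \<subseteq> Ob \<union> insert o1 X'" using Y by auto
    have finY: "finite Y" using YU finU finite_subset by blast
    show "?w (prodP Y) \<le> (INF y\<in>Y \<inter> (Ob \<union> {o1}). ?w y)"
    proof (cases "o1 \<in> Y \<and> o1 \<notin> Ob")
      case False
      then have "Y \<inter> (Ob \<union> {o1}) = Y \<inter> Ob" by auto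
      then show ?thesis using extO[OF YU] ne by auto
    next
      case True
      define A where "A = Y \<inter> Ob"
      define B where "B = Y - Ob - {o1}"
      have AO: "A \<subseteq> Ob" unfolding A_def by auto
      have BX: "B \<subseteq> X'" using Y unfolding B_def by auto
      have finA: "finite A" and finB: "finite B" using finY unfolding A_def B_def by auto
      have YAB: "Y = insert o1 (A \<union> B)" using True unfolding A_def B_def by auto
      have pY: "prodP Y = pmult o1 (pmult (prodP A) (prodP B))"
      proof -
        have d: "A \<inter> B = {}" and n: "o1 \<notin> A \<union> B" using True unfolding A_def B_def by auto
        have "prodP Y = pmult o1 (prodP (A \<union> B))"
          unfolding YAB by (rule prodP_insert) (use finA finB n in auto)
        then show ?thesis using prodP_union[OF finA finB d] by simp
      qed
      have iY: "(INF y\<in>Y \<inter> (Ob \<union> {o1}). ?w y) = min (?w o1) (INF y\<in>A. ?w y)"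
      proof -
        have "Y \<inter> (Ob \<union> {o1}) = insert o1 A" using True unfolding A_def by auto
        then show ?thesis by (simp add: inf_min)
      qed
      have ii: "?w (prodP Y) \<le> (INF y\<in>A. ?w y)"
      proof (cases "A = {}")
        case True then show ?thesis by simp
      next
        case False
        then show ?thesis using extO[OF YU] unfolding A_def by auto
      qed
      have nb: "\<not> anticommutes N h (prodP B)" using anti_prodP finB BX assms(9) by blast
      have i: "?w (prodP Y) \<le> ?w o1"
      proof (cases "anticommutes N h (prodP Y)")
        case True
        then show ?thesis using omega_le[OF assms(6)] assms(7) by metis
      next
        case False
        then have ha: "anticommutes N h (prodP A)"
          using pY nb assms(8) by (auto simp: anti_mult)
        then have "A \<noteq> {}" using anti_pid[of N h] by auto
        have "?w (prodP A) \<le> ?w o1" using omega_le[OF assms(6) ha] assms(7) by metis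
        then show ?thesis using ii unO[OF AO] by auto
      qed
      show ?thesis using i ii iY by auto
    qed
  qed
  show ?thesis using P1 P2 by auto
qed

end
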